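(* Let $X,X_1,X_2,\dots$ be i.i.d. real random variables with $EX=0$ and $E|X|^{2+\varepsilon}<\infty$ for some $\varepsilon>0$. Let $\mu>0$, $m\ge1$, $\delta\in(0,1/2]$ and $\alpha$ satisfy $2<\alpha\le(2+\varepsilon)(1-\delta)$, and assume $$\frac{6\cdot 2^{\alpha}}{(\alpha-1)(m+1)^{\alpha-1}\mu}\,E\big[(X^+)^{2+\varepsilon}\big]\le1.$$ Let $n_k=2^{k-1}$ for $k\ge1$, $\bar G(t)=\int_t^\infty (1+s)^{-\alpha}\,ds$, and $$g(k)=\frac{\bar G(m+\mu n_{k-1})-\bar G(m+\mu n_k)}{\bar G(m+\mu n_1)},\qquad k\ge2,$$ and $A_k=\bigcup_{j=n_{k-1}}^{n_k-1}\{X_j>(\mu j+m)^{1-\delta}\}$. Then $$\frac{3P(A_k)}{g(k)}\le1\qquad\text{for all }k\ge2.$$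
   Context: $X^+=\max(X,0)$. $g$ is a probability mass function on $\{2,3,\dots\}$ (it is the law of the dyadic block containing a level associated with a Pareto random variable $Y$ with $P(Y>y)=(1+y)^{-\alpha}$, $y\ge0$). *)

theory Defs
  imports "HOL-Probability.Probability"
begin

definition Gbar :: "real \<Rightarrow> real \<Rightarrow> real" where
  "Gbar \<alpha> t = (LBINT s:{t..}. (1 + s) powr (-\<alpha>))"

definition nk :: "nat \<Rightarrow> nat" where
  "nk k = 2 ^ (k - 1)"

definition gblock :: "real \<Rightarrow> real \<Rightarrow> real \<Rightarrow> nat \<Rightarrow> real" where
  "gblock \<alpha> m \<mu> k =
     (Gbar \<alpha> (m + \<mu> * real (nk (k - 1))) - Gbar \<alpha> (m + \<mu> * real (nk k)))
       / Gbar \<alpha> (m + \<mu> * real (nk 1))"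

definition Ablock :: "'a measure \<Rightarrow> (nat \<Rightarrow> 'a \<Rightarrow> real) \<Rightarrow> real \<Rightarrow> real \<Rightarrow> real \<Rightarrow> nat \<Rightarrow> 'a set" where
  "Ablock M X \<mu> m \<delta> k =
     (\<Union>j\<in>{nk (k - 1) .. nk k - 1}. {\<omega> \<in> space M. X j \<omega> > (\<mu> * real j + m) powr (1 - \<delta>)})"

end

theory Submission
  imports Defs "HOL-Real_Asymp.Real_Asymp"
begin

lemma hasint_G:
  fixes t a :: real
  assumes "a > 1" "t > -1"
  shows "((\<lambda>s. (1 + s) powr (-a)) has_integral (1 + t) powr (1 - a) / (a - 1)) {t..}"
proof (rule has_integral_to_inf)
  define F where "F \<equiv> \<lambda>x::real. (1 + x) powr (1 - a) / (1 - a)"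
  have d: "((\<lambda>s. (1 + s) powr (-a)) has_integral (F y - F t)) {t..y}" if "y \<ge> t" for y
  proof (intro fundamental_theorem_of_calculus that)
    fix x assume x: "x \<in> {t..y}"
    then have x1: "1 + x > 0" using assms by auto
    have "((\<lambda>x. (1+x) powr (1-a)/(1-a)) has_real_derivative ((1-a)*(1+x) powr (1-a-1) * (0 + 1))/(1-a)) (at x)"
      using x1 assms by (intro derivative_eq_intros) auto
    moreover have "((1-a)*(1+x) powr (1-a-1) * (0 + 1))/(1-a) = (1 + x) powr (-a)"
      using assms by simp
    ultimately show "(F has_vector_derivative (1 + x) powr (-a)) (at x within {t..y})"
      unfolding F_def by (metis has_field_derivative_at_within has_real_derivative_iff_has_vector_derivative)
  qed
  then show "(\<lambda>s. (1 + s) powr (-a)) integrable_on {t..y}" for y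
    by (cases "y \<ge> t") (auto simp: integrable_on_def)
  have "\<forall>\<^sub>F y in at_top. integral {t..y} (\<lambda>s. (1 + s) powr (-a)) = F y - F t"
    using d by (meson eventually_at_top_linorderI integral_unique)
  moreover have "((\<lambda>y::real. F y - F t) \<longlongrightarrow> - F t) at_top"
    using assms unfolding F_def by real_asymp
  ultimately have "((\<lambda>y. integral {t..y} (\<lambda>s. (1 + s) powr (-a))) \<longlongrightarrow> - F t) at_top"
    by (simp add: tendsto_cong)
  moreover have "- F t = (1 + t) powr (1 - a) / (a - 1)" unfolding F_def using assms
    by (simp add: divide_simps algebra_simps)
  ultimately show "((\<lambda>y. integral {t..y} (\<lambda>s. (1 + s) powr (-a))) \<longlongrightarrow> (1 + t) powr (1 - a) / (a - 1)) at_top"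
    by simp
qed auto

lemma Gbar_eq:
  assumes "a > 1" "t > -1"
  shows "Gbar a t = (1 + t) powr (1 - a) / (a - 1)"
proof -
  note h = hasint_G[OF assms]
  have ai: "(\<lambda>s. (1 + s) powr (-a)) absolutely_integrable_on {t..}"
    by (rule nonnegative_absolutely_integrable_1) (use h in \<open>auto simp: integrable_on_def\<close>)
  have meas: "(\<lambda>x. indicator {t..} x *\<^sub>R (1 + x) powr (-a)) \<in> borel_measurable lborel"
    by measurable
  have "set_integrable lborel {t..} (\<lambda>s. (1 + s) powr (-a))"
    using ai meas unfolding set_integrable_def
    by (simp add: integrable_completion)
  then have "Gbar a t = integral {t..} (\<lambda>s. (1 + s) powr (-a))"
    unfolding Gbar_def by (rule set_borel_integral_eq_integral)
  then show ?thesis using h integral_unique by metis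
qed

lemma diff_lb:
  fixes u v a :: real
  assumes "0 < u" "u < v" "a > 1"
  shows "u powr (1 - a) - v powr (1 - a) \<ge> (a - 1) * (v - u) / v powr a"
proof -
  have "\<And>x. u \<le> x \<Longrightarrow> x \<le> v \<Longrightarrow> DERIV (\<lambda>x. x powr (1 - a)) x :> (1 - a) * x powr (1 - a - 1)"
    using assms by (intro has_real_derivative_powr) auto
  from MVT2[OF assms(2) this] obtain z where z: "u < z" "z < v"
    and eq: "v powr (1 - a) - u powr (1 - a) = (v - u) * ((1 - a) * z powr (1 - a - 1))" by blast
  have zp: "z powr (1 - a - 1) = 1 / z powr a" using z assms by (simp add: powr_minus_divide)
  have "z powr a \<le> v powr a" using z assms by (intro powr_mono2) auto
  then have "1 / v powr a \<le> 1 / z powr a" using z assms by (intro divide_left_mono) auto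
  then have "(a - 1) * (v - u) * (1 / v powr a) \<le> (a - 1) * (v - u) * (1 / z powr a)"
    using assms by (intro mult_left_mono) auto
  moreover
  define w where "w = 1 / z powr a"
  have e2: "v powr (1 - a) - u powr (1 - a) = (v - u) * ((1 - a) * w)"
    using eq zp unfolding w_def by simp
  have "u powr (1 - a) - v powr (1 - a) = (a - 1) * (v - u) * w"
    using e2 by (simp add: algebra_simps)
  ultimately show ?thesis unfolding w_def by simp
qed
theorem lemma1:
  fixes M :: "'a measure" and X :: "nat \<Rightarrow> 'a \<Rightarrow> real"
    and \<epsilon> \<mu> m \<delta> \<alpha> :: real
  assumes "prob_space M"
    and indep: "prob_space.indep_vars M (\<lambda>_. borel) X UNIV"
    and ident: "\<And>i. distr M borel (X i) = distr M borel (X 0)"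
    and int: "integrable M (X 0)"
    and mean0: "(\<integral>\<omega>. X 0 \<omega> \<partial>M) = 0"
    and eps: "\<epsilon> > 0"
    and mom: "integrable M (\<lambda>\<omega>. \<bar>X 0 \<omega>\<bar> powr (2 + \<epsilon>))"
    and mu: "\<mu> > 0" and m: "m \<ge> 1"
    and delta: "0 < \<delta>" "\<delta> \<le> 1/2"
    and alpha: "2 < \<alpha>" "\<alpha> \<le> (2 + \<epsilon>) * (1 - \<delta>)"
    and cond: "6 * 2 powr \<alpha> / ((\<alpha> - 1) * (m + 1) powr (\<alpha> - 1) * \<mu>)
                 * (\<integral>\<omega>. (max (X 0 \<omega>) 0) powr (2 + \<epsilon>) \<partial>M) \<le> 1"
  shows "\<forall>k\<ge>2. 3 * measure M (Ablock M X \<mu> m \<delta> k) / gblock \<alpha> m \<mu> k \<le> 1"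
proof -
  interpret P: prob_space M by fact
  define p where "p = 2 + \<epsilon>"
  define E where "E = (\<integral>\<omega>. (max (X 0 \<omega>) 0) powr (2 + \<epsilon>) \<partial>M)"
  have X0m[measurable]: "X 0 \<in> borel_measurable M" using int by auto
  have Xm[measurable]: "\<And>j. X j \<in> borel_measurable M"
    using indep unfolding P.indep_vars_def by auto
  have uint: "integrable M (\<lambda>\<omega>. (max (X 0 \<omega>) 0) powr p)"
  proof (rule Bochner_Integration.integrable_bound[OF mom])
    show "(\<lambda>\<omega>. (max (X 0 \<omega>) 0) powr p) \<in> borel_measurable M" by measurable
    show "AE x in M. norm (max (X 0 x) 0 powr p) \<le> norm (\<bar>X 0 x\<bar> powr (2 + \<epsilon>))"
    proof (rule AE_I2)
      fix x
      have "max (X 0 x) 0 powr p \<le> \<bar>X 0 x\<bar> powr p"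
        using eps unfolding p_def by (intro powr_mono2) auto
      then show "norm (max (X 0 x) 0 powr p) \<le> norm (\<bar>X 0 x\<bar> powr (2 + \<epsilon>))"
        unfolding p_def by simp
    qed
  qed
  have E0: "E \<ge> 0" unfolding E_def by (intro integral_nonneg_AE) auto
  have tail: "measure M {\<omega>\<in>space M. X j \<omega> > t} \<le> E / t powr p" if t: "t > 0" for j t
  proof -
    have "measure M {\<omega>\<in>space M. X j \<omega> > t} = measure (distr M borel (X j)) {t<..}"
      by (subst measure_distr) (auto intro!: arg_cong[where f="measure M"])
    also have "\<dots> = measure (distr M borel (X 0)) {t<..}" by (simp only: ident[of j])
    also have "\<dots> = measure M {\<omega>\<in>space M. X 0 \<omega> > t}"
      by (subst measure_distr) (auto intro!: arg_cong[where f="measure M"])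
    also have "\<dots> \<le> measure M {\<omega>\<in>space M. max (X 0 \<omega>) 0 powr p \<ge> t powr p}"
    proof (rule P.finite_measure_mono)
      show "{\<omega> \<in> space M. t < X 0 \<omega>} \<subseteq> {\<omega> \<in> space M. t powr p \<le> max (X 0 \<omega>) 0 powr p}"
        using t eps unfolding p_def by (auto intro!: powr_mono2)
      show "{\<omega> \<in> space M. t powr p \<le> max (X 0 \<omega>) 0 powr p} \<in> sets M" by measurable
    qed
    also have "\<dots> \<le> (\<integral>\<omega>. (max (X 0 \<omega>) 0) powr p \<partial>M) / t powr p"
      by (rule integral_Markov_inequality_measure[OF uint, of "space M"]) (use t in auto)
    finally show ?thesis unfolding E_def p_def .
  qed
  show ?thesis
  proof (intro allI impI)
    fix k :: nat assume k: "k \<ge> 2"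
    define a where "a = nk (k - 1)"
    have nkk: "nk k = 2 * a"
    proof -
      obtain q where q: "k = Suc (Suc q)" using k by (metis add_2_eq_Suc le_Suc_ex)
      show ?thesis unfolding a_def nk_def q by simp
    qed
    have a1: "a \<ge> 1" unfolding a_def nk_def by simp
    have Ab: "Ablock M X \<mu> m \<delta> k = (\<Union>j\<in>{a..2*a-1}. {\<omega>\<in>space M. X j \<omega> > (\<mu>*real j+m) powr (1-\<delta>)})"
      unfolding Ablock_def a_def[symmetric] nkk ..
    define D where "D = (m + \<mu> * real a) powr \<alpha>"
    have mpos: "m + \<mu> * real a > 0" using mu m by (smt (verit) mult_nonneg_nonneg of_nat_0_le_iff)
    have Dp: "D > 0" unfolding D_def using mpos by simp
    have tm: "measure M {\<omega>\<in>space M. X j \<omega> > (\<mu>*real j+m) powr (1-\<delta>)} \<le> E / D"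
      if j: "j \<in> {a..2*a-1}" for j
    proof -
      have b1: "\<mu>*real j+m \<ge> 1" using mu m by (simp add: add_increasing)
      have "measure M {\<omega>\<in>space M. X j \<omega> > (\<mu>*real j+m) powr (1-\<delta>)}
            \<le> E / ((\<mu>*real j+m) powr (1-\<delta>)) powr p"
        using b1 by (intro tail) auto
      also have "((\<mu>*real j+m) powr (1-\<delta>)) powr p = (\<mu>*real j+m) powr ((2+\<epsilon>)*(1-\<delta>))"
        unfolding p_def by (simp add: powr_powr mult_ac)
      also have "E / \<dots> \<le> E / D"
      proof (rule divide_left_mono[OF _ E0])
        have "D \<le> (\<mu>*real j+m) powr \<alpha>" unfolding D_def
          using j mu m alpha mpos by (intro powr_mono2) (auto simp: add.commute)
        also have "\<dots> \<le> (\<mu>*real j+m) powr ((2+\<epsilon>)*(1-\<delta>))"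
          using b1 alpha by (intro powr_mono) auto
        finally show "D \<le> \<dots>" .
        show "0 < (\<mu>*real j+m) powr ((2+\<epsilon>)*(1-\<delta>)) * D" using b1 Dp by simp
      qed
      finally show ?thesis .
    qed
    have PA: "measure M (Ablock M X \<mu> m \<delta> k) \<le> real a * E / D"
    proof -
      have "measure M (Ablock M X \<mu> m \<delta> k) \<le> (\<Sum>j\<in>{a..2*a-1}. measure M {\<omega>\<in>space M. X j \<omega> > (\<mu>*real j+m) powr (1-\<delta>)})"
        unfolding Ab by (intro measure_UNION_le) (simp, measurable)
      also have "\<dots> \<le> (\<Sum>j\<in>{a..2*a-1}. E / D)" by (intro sum_mono tm)
      also have "\<dots> = real a * E / D" using a1 by simp
      finally show ?thesis .
    qed
    have al1: "\<alpha> > 1" using alpha by simp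
    define u where "u = 1 + m + \<mu> * real a"
    define v where "v = 1 + m + \<mu> * (2 * real a)"
    have up: "u > 0" unfolding u_def using mpos by simp
    have uv: "u < v" unfolding u_def v_def using mu a1 by simp
    have g: "gblock \<alpha> m \<mu> k = (u powr (1 - \<alpha>) - v powr (1 - \<alpha>)) / (1 + m + \<mu>) powr (1 - \<alpha>)"
    proof -
      have n1: "nk 1 = 1" by (simp add: nk_def)
      have G1: "Gbar \<alpha> (m + \<mu> * real a) = u powr (1 - \<alpha>) / (\<alpha> - 1)"
        using Gbar_eq[OF al1, of "m + \<mu> * real a"] mpos unfolding u_def by (simp add: add.assoc)
      have G2: "Gbar \<alpha> (m + \<mu> * real (2 * a)) = v powr (1 - \<alpha>) / (\<alpha> - 1)"
      proof -
        have "m + \<mu> * real (2 * a) > -1" using mu m by (smt (verit) mult_nonneg_nonneg of_nat_0_le_iff)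
        then show ?thesis using Gbar_eq[OF al1, of "m + \<mu> * real (2 * a)"] unfolding v_def by (simp add: add.assoc)
      qed
      have G3: "Gbar \<alpha> (m + \<mu> * real (nk 1)) = (1 + m + \<mu>) powr (1 - \<alpha>) / (\<alpha> - 1)"
        using Gbar_eq[OF al1, of "m + \<mu>"] mu m unfolding n1 by (simp add: add.assoc)
      show ?thesis unfolding gblock_def a_def[symmetric] nkk G1 G2 G3 using al1
        by (simp add: diff_divide_distrib[symmetric])
    qed
    have vu: "v - u = \<mu> * real a" by (simp add: u_def v_def)
    have diff: "u powr (1 - \<alpha>) - v powr (1 - \<alpha>) \<ge> (\<alpha> - 1) * (\<mu> * real a) / v powr \<alpha>"
      using diff_lb[OF up uv al1] vu by simp
    define T where "T = (2::real) powr \<alpha>"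
    define R where "R = (m + 1) powr (\<alpha> - 1)"
    have Tp: "T > 0" unfolding T_def by simp
    have Rp: "R > 0" unfolding R_def using m by simp
    have vp: "v > 0" using up uv by simp
    have "v \<le> 2 * (m + \<mu> * real a)" using m unfolding v_def by simp
    then have "v powr \<alpha> \<le> (2 * (m + \<mu> * real a)) powr \<alpha>"
      using vp al1 by (intro powr_mono2) auto
    also have "\<dots> = T * D" unfolding T_def D_def using mpos by (subst powr_mult) auto
    finally have vT: "v powr \<alpha> \<le> T * D" .
    define N0 where "N0 = (\<alpha> - 1) * (\<mu> * real a) / (T * D)"
    have N0p: "N0 > 0" unfolding N0_def using al1 mu a1 Tp Dp by simp
    have "(\<alpha> - 1) * (\<mu> * real a) / (T * D) \<le> (\<alpha> - 1) * (\<mu> * real a) / v powr \<alpha>"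
      using vT vp al1 mu a1 Tp Dp by (intro divide_left_mono) auto
    then have num: "u powr (1 - \<alpha>) - v powr (1 - \<alpha>) \<ge> N0" using diff unfolding N0_def by linarith
    define W where "W = 1 + m + \<mu>"
    have Wp: "W > 0" unfolding W_def using mu m by simp
    have Z: "W powr (1 - \<alpha>) = 1 / (W powr (\<alpha> - 1))"
      by (metis minus_diff_eq powr_minus_divide)
    have RZ: "R \<le> W powr (\<alpha> - 1)" unfolding R_def W_def using mu m al1 by (intro powr_mono2) auto
    have den: "W powr (1 - \<alpha>) \<le> 1 / R" "W powr (1 - \<alpha>) > 0"
      unfolding Z using RZ Rp Wp by (auto intro!: divide_left_mono)
    have "N0 / (1 / R) \<le> N0 / W powr (1 - \<alpha>)"
      by (rule divide_left_mono) (use den N0p Rp in auto)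
    then have "N0 * R \<le> N0 / W powr (1 - \<alpha>)" by simp
    also have "\<dots> \<le> (u powr (1 - \<alpha>) - v powr (1 - \<alpha>)) / W powr (1 - \<alpha>)"
      using num den by (intro divide_right_mono) auto
    also have "\<dots> = gblock \<alpha> m \<mu> k" using g unfolding W_def by simp
    finally have gb: "gblock \<alpha> m \<mu> k \<ge> N0 * R" .
    have C: "6 * T / ((\<alpha> - 1) * R * \<mu>) * E \<le> 1" using cond unfolding T_def R_def E_def .
    have Cp: "6 * T / ((\<alpha> - 1) * R * \<mu>) > 0" using Tp al1 Rp mu by simp
    have "E \<le> 1 / (6 * T / ((\<alpha> - 1) * R * \<mu>))"
      using C Cp by (simp only: pos_le_divide_eq mult.commute)
    then have Eb: "E \<le> (\<alpha> - 1) * R * \<mu> / (6 * T)" by simp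
    have "real a * E / D \<le> real a * ((\<alpha> - 1) * R * \<mu> / (6 * T)) / D"
      using Eb Dp by (intro divide_right_mono mult_left_mono) auto
    also have "\<dots> = N0 * R / 6" unfolding N0_def by (simp add: ac_simps)
    finally have PA2: "measure M (Ablock M X \<mu> m \<delta> k) \<le> N0 * R / 6" using PA by linarith
    have NR: "N0 * R > 0" using N0p Rp by simp
    have gp: "gblock \<alpha> m \<mu> k > 0" using gb NR by linarith
    have "3 * measure M (Ablock M X \<mu> m \<delta> k) \<le> gblock \<alpha> m \<mu> k"
      using PA2 gb NR by linarith
    then show "3 * measure M (Ablock M X \<mu> m \<delta> k) / gblock \<alpha> m \<mu> k \<le> 1"
      using gp by simp
  qed
qed
end
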